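(* Let $C\subset\mathbb{P}^2$ be the Klein quartic and let $p_1\in C\setminus\{e_1,e_2,e_3\}$. Set $p_i=\varphi^{i-1}(p_1)$ for $i=1,\dots,7$, and suppose that the lines $\overline{p_1p_3}$ and $\overline{p_5p_7}$ meet in a point of $C$. If the lines \[L_1=\overline{p_6p_1},\ L_2=\overline{p_7p_2},\ L_3=\overline{p_1p_3},\ L_4=\overline{p_2p_4},\ L_5=\overline{p_3p_5},\ L_6=\overline{p_4p_6},\ L_7=\overline{p_5p_7}\] form a heptagon, then its adjoint quartic is $C$.
   Context: Work over $\mathbb{C}$. The Klein quartic is $C=\{x^3y+y^3z+z^3x=0\}\subset\mathbb{P}^2$. Let $e_1=[1:0:0]$, $e_2=[0:1:0]$, $e_3=[0:0:1]$. Let $\zeta$ be a primitive seventh root of unity and $\varphi\colon[x:y:z]\mapsto[\zeta^4x:\zeta^2y:\zeta z]$, an automorphism of $C$ of order $7$. $\overline{pq}$ denotes the line through $p$ and $q$. A heptagon is an ordered $7$-tuple of distinct lines in $\mathbb{P}^2$ with no three concurrent; its adjoint is the unique plane quartic through the $14$ points $L_i\cap L_j$ with $i,j$ non-consecutive modulo $7$. *)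

theory Defs
  imports Complex_Main
begin

text \<open>Homogeneous coordinates in P^2(C): nonzero triples up to nonzero scalars.
  Lines are represented dually by nonzero coefficient triples (a,b,c), the line
  a x + b y + c z = 0.\<close>

type_synonym pt = "complex \<times> complex \<times> complex"

definition nz :: "pt \<Rightarrow> bool" where
  "nz p \<longleftrightarrow> p \<noteq> (0, 0, 0)"

definition smult3 :: "complex \<Rightarrow> pt \<Rightarrow> pt" where
  "smult3 c p = (case p of (x, y, z) \<Rightarrow> (c * x, c * y, c * z))"

definition proj_eq :: "pt \<Rightarrow> pt \<Rightarrow> bool" where
  "proj_eq p q \<longleftrightarrow> nz p \<and> nz q \<and> (\<exists>c. c \<noteq> 0 \<and> q = smult3 c p)"

definition dot3 :: "pt \<Rightarrow> pt \<Rightarrow> complex" where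
  "dot3 p q = (case p of (a, b, c) \<Rightarrow> case q of (x, y, z) \<Rightarrow> a * x + b * y + c * z)"

definition cross3 :: "pt \<Rightarrow> pt \<Rightarrow> pt" where
  "cross3 p q = (case p of (a1, a2, a3) \<Rightarrow> case q of (b1, b2, b3) \<Rightarrow>
      (a2 * b3 - a3 * b2, a3 * b1 - a1 * b3, a1 * b2 - a2 * b1))"

definition det3 :: "pt \<Rightarrow> pt \<Rightarrow> pt \<Rightarrow> complex" where
  "det3 p q r = dot3 p (cross3 q r)"

definition line_through :: "pt \<Rightarrow> pt \<Rightarrow> pt" where
  "line_through p q = cross3 p q"

definition meet :: "pt \<Rightarrow> pt \<Rightarrow> pt" where
  "meet L M = cross3 L M"

definition on_line :: "pt \<Rightarrow> pt \<Rightarrow> bool" where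
  "on_line p L \<longleftrightarrow> dot3 L p = 0"

definition klein :: "pt \<Rightarrow> complex" where
  "klein p = (case p of (x, y, z) \<Rightarrow> x ^ 3 * y + y ^ 3 * z + z ^ 3 * x)"

definition on_klein :: "pt \<Rightarrow> bool" where
  "on_klein p \<longleftrightarrow> nz p \<and> klein p = 0"

definition e1 :: pt where "e1 = (1, 0, 0)"
definition e2 :: pt where "e2 = (0, 1, 0)"
definition e3 :: pt where "e3 = (0, 0, 1)"

text \<open>The order 7 automorphism, for a primitive seventh root of unity \<zeta>.\<close>
definition phi :: "complex \<Rightarrow> pt \<Rightarrow> pt" where
  "phi \<zeta> p = (case p of (x, y, z) \<Rightarrow> (\<zeta> ^ 4 * x, \<zeta> ^ 2 * y, \<zeta> * z))"

definition quartic_eval :: "(nat \<Rightarrow> nat \<Rightarrow> complex) \<Rightarrow> pt \<Rightarrow> complex" where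
  "quartic_eval Q p = (case p of (x, y, z) \<Rightarrow>
      (\<Sum>a\<le>4. \<Sum>b\<le>4 - a. Q a b * x ^ a * y ^ b * z ^ (4 - a - b)))"

definition is_quartic_form :: "(pt \<Rightarrow> complex) \<Rightarrow> bool" where
  "is_quartic_form F \<longleftrightarrow>
     (\<exists>Q. (\<exists>a b. a + b \<le> 4 \<and> Q a b \<noteq> 0) \<and> F = quartic_eval Q)"

definition heptagon :: "(nat \<Rightarrow> pt) \<Rightarrow> bool" where
  "heptagon L \<longleftrightarrow>
     (\<forall>i<7. nz (L i)) \<and>
     (\<forall>i<7. \<forall>j<7. i \<noteq> j \<longrightarrow> \<not> proj_eq (L i) (L j)) \<and>
     (\<forall>i<7. \<forall>j<7. \<forall>k<7. i \<noteq> j \<and> j \<noteq> k \<and> i \<noteq> k \<longrightarrow> det3 (L i) (L j) (L k) \<noteq> 0)"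

definition nonconsec7 :: "nat \<Rightarrow> nat \<Rightarrow> bool" where
  "nonconsec7 i j \<longleftrightarrow> i < 7 \<and> j < 7 \<and> i \<noteq> j \<and> j \<noteq> (i + 1) mod 7 \<and> i \<noteq> (j + 1) mod 7"

definition adjoint_points :: "(nat \<Rightarrow> pt) \<Rightarrow> pt set" where
  "adjoint_points L = {meet (L i) (L j) | i j. nonconsec7 i j}"

definition is_adjoint :: "(nat \<Rightarrow> pt) \<Rightarrow> (pt \<Rightarrow> complex) \<Rightarrow> bool" where
  "is_adjoint L F \<longleftrightarrow> is_quartic_form F \<and> (\<forall>q\<in>adjoint_points L. F q = 0) \<and>
     (\<forall>G. is_quartic_form G \<and> (\<forall>q\<in>adjoint_points L. G q = 0) \<longrightarrow> (\<exists>c. G = (\<lambda>p. c * F p)))"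

end

theory Submission
  imports Defs "HOL-Computational_Algebra.Polynomial"
begin


lemma coeff_top:
  fixes p q :: "'a::comm_semiring_0 poly"
  assumes "degree p \<le> m" "degree q \<le> n"
  shows "coeff (p*q) (m+n) = coeff p m * coeff q n"
proof -
  have "coeff (p*q) (m+n) = (\<Sum>i\<le>m+n. coeff p i * coeff q (m+n-i))" by (rule coeff_mult)
  also have "\<dots> = (\<Sum>i\<in>{m}. coeff p i * coeff q (m+n-i))"
  proof (rule sum.mono_neutral_right)
    show "\<forall>i\<in>{..m+n} - {m}. coeff p i * coeff q (m+n-i) = 0"
    proof
      fix i assume "i \<in> {..m+n} - {m}"
      then have "i < m \<or> i > m" by auto
      then show "coeff p i * coeff q (m+n-i) = 0"
      proof
        assume "i < m"
        then have "degree q < m+n-i" using assms by linarith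
        then show ?thesis by (simp add: coeff_eq_0)
      next
        assume "i > m"
        then have "degree p < i" using assms by linarith
        then show ?thesis by (simp add: coeff_eq_0)
      qed
    qed
  qed auto
  finally show ?thesis by simp
qed

lemma lin_pow:
  fixes a b :: "'a::comm_semiring_1"
  shows "degree ([:a,b:]^n) \<le> n \<and> coeff ([:a,b:]^n) n = b^n"
proof (induction n)
  case 0 then show ?case by simp
next
  case (Suc n)
  have d1: "degree [:a,b:] \<le> 1" by simp
  have "degree ([:a,b:]^Suc n) \<le> Suc n"
    using degree_power_le[of "[:a,b:]" "Suc n"] mult_le_mono1[OF d1, of "Suc n"]
    by simp
  moreover have "coeff ([:a,b:]^Suc n) (1 + n) = coeff [:a,b:] 1 * coeff ([:a,b:]^n) n"
    unfolding power_Suc by (rule coeff_top[OF d1]) (use Suc in auto)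
  ultimately show ?case using Suc by simp
qed

lemma prod3_top:
  fixes a1 b1 a2 b2 a3 b3 :: complex
  assumes "i + j + k = 4"
  shows "degree ([:a1,b1:]^i * [:a2,b2:]^j * [:a3,b3:]^k) \<le> 4"
    "coeff ([:a1,b1:]^i * [:a2,b2:]^j * [:a3,b3:]^k) 4 = b1^i * b2^j * b3^k"
proof -
  have d: "degree ([:a1,b1:]^i * [:a2,b2:]^j) \<le> i + j"
    using lin_pow[of a1 b1 i] lin_pow[of a2 b2 j] degree_mult_le[of "[:a1,b1:]^i" "[:a2,b2:]^j"] by linarith
  show "degree ([:a1,b1:]^i * [:a2,b2:]^j * [:a3,b3:]^k) \<le> 4"
    using lin_pow[of a3 b3 k] d degree_mult_le[of "[:a1,b1:]^i * [:a2,b2:]^j" "[:a3,b3:]^k"] assms by linarith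
  have "coeff ([:a1,b1:]^i * [:a2,b2:]^j * [:a3,b3:]^k) ((i+j)+k)
     = coeff ([:a1,b1:]^i * [:a2,b2:]^j) (i+j) * coeff ([:a3,b3:]^k) k"
    by (rule coeff_top[OF d]) (use lin_pow in auto)
  also have "coeff ([:a1,b1:]^i * [:a2,b2:]^j) (i+j) = b1^i * b2^j"
    using lin_pow[of a1 b1 i] lin_pow[of a2 b2 j] coeff_top[of "[:a1,b1:]^i" i "[:a2,b2:]^j" j] by simp
  finally show "coeff ([:a1,b1:]^i * [:a2,b2:]^j * [:a3,b3:]^k) 4 = b1^i * b2^j * b3^k"
    using assms lin_pow[of a3 b3 k] by simp
qed

lemma linpoly:
  "\<exists>h. degree h \<le> 4 \<and> coeff h 4 = quartic_eval Q (v1,v2,v3) \<and>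
     (\<forall>t. quartic_eval Q (u1+t*v1, u2+t*v2, u3+t*v3) = poly h t)"
proof -
  define h where "h = (\<Sum>a\<le>4. \<Sum>b\<le>4-a. smult (Q a b) ([:u1,v1:]^a * [:u2,v2:]^b * [:u3,v3:]^(4-a-b)))"
  have D: "degree h \<le> 4" unfolding h_def
    by (intro degree_sum_le) (auto intro!: order.trans[OF degree_smult_le] prod3_top)
  have "coeff h 4 = (\<Sum>a\<le>4. \<Sum>b\<le>4-a. Q a b * (v1^a*v2^b*v3^(4-a-b)))"
    unfolding h_def coeff_sum coeff_smult by (intro sum.cong refl) (simp add: prod3_top)
  then have "coeff h 4 = quartic_eval Q (v1,v2,v3)"
    by (simp add: quartic_eval_def mult.assoc)
  moreover have "\<forall>t. quartic_eval Q (u1+t*v1, u2+t*v2, u3+t*v3) = poly h t"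
    unfolding h_def quartic_eval_def poly_sum by (simp add: mult.assoc)
  ultimately show ?thesis using D by blast
qed



definition lc :: "complex \<Rightarrow> pt \<Rightarrow> complex \<Rightarrow> pt \<Rightarrow> pt" where
  "lc \<alpha> u \<beta> v = (case u of (u1,u2,u3) \<Rightarrow> case v of (v1,v2,v3) \<Rightarrow>
      (\<alpha>*u1+\<beta>*v1, \<alpha>*u2+\<beta>*v2, \<alpha>*u3+\<beta>*v3))"

lemma homog: "quartic_eval Q (smult3 c p) = c^4 * quartic_eval Q p"
proof -
  obtain x y z where p: "p = (x,y,z)" by (cases p)
  have key: "Q a b*(c*x)^a*(c*y)^b*(c*z)^(4-a-b) = c^4 * (Q a b*x^a*y^b*z^(4-a-b))"
    if "a \<le> 4" "b \<le> 4 - a" for a b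
  proof -
    have e: "c^a*c^b*c^(4-a-b) = c^4"
      using that by (simp add: power_add[symmetric])
    have "Q a b*(c*x)^a*(c*y)^b*(c*z)^(4-a-b) = (c^a*c^b*c^(4-a-b)) * (Q a b*x^a*y^b*z^(4-a-b))"
      by (simp add: power_mult_distrib mult_ac)
    then show ?thesis by (simp only: e)
  qed
  have "(\<Sum>a\<le>4. \<Sum>b\<le>4-a. Q a b*(c*x)^a*(c*y)^b*(c*z)^(4-a-b))
      = (\<Sum>a\<le>4. \<Sum>b\<le>4-a. c^4 * (Q a b*x^a*y^b*z^(4-a-b)))"
    apply (intro sum.cong refl) apply (rule key) by auto
  then show ?thesis unfolding p smult3_def quartic_eval_def
    by (simp add: sum_distrib_left)
qed

lemma zero_pt: "quartic_eval Q (0,0,0) = 0"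
  using homog[of Q 0 "(0,0,0)"] by (simp add: smult3_def)

lemma qf_comb: "quartic_eval Q p - c * quartic_eval Q' p = quartic_eval (\<lambda>a b. Q a b - c * Q' a b) p"
  by (cases p) (simp add: quartic_eval_def sum_subtractf sum_distrib_left algebra_simps)

lemma cross_prop:
  assumes "cross3 q w = (0,0,0)" "q \<noteq> (0,0,0)"
  shows "\<exists>c. w = smult3 c q"
proof -
  obtain a b c where q: "q = (a,b,c)" by (cases q)
  obtain x y z where w: "w = (x,y,z)" by (cases w)
  have e: "b*z = c*y" "c*x = a*z" "a*y = b*x" using assms(1) unfolding q w cross3_def by auto
  consider "a \<noteq> 0" | "b \<noteq> 0" | "c \<noteq> 0" using assms(2) q by auto
  then show ?thesis
  proof cases
    case 1
    then have "w = smult3 (x/a) q" unfolding q w smult3_def using e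
      by (auto simp: field_simps; metis mult.commute)
    then show ?thesis by blast
  next
    case 2
    then have "w = smult3 (y/b) q" unfolding q w smult3_def using e
      by (auto simp: field_simps; metis mult.commute)
    then show ?thesis by blast
  next
    case 3
    then have "w = smult3 (z/c) q" unfolding q w smult3_def using e
      by (auto simp: field_simps; metis mult.commute)
    then show ?thesis by blast
  qed
qed

lemma decomp:
  assumes "cross3 u v \<noteq> (0,0,0)" "det3 u v r = 0"
  shows "\<exists>\<alpha> \<beta>. r = lc \<alpha> u \<beta> v"
proof -
  obtain a1 a2 a3 where u: "u = (a1,a2,a3)" by (cases u)
  obtain b1 b2 b3 where v: "v = (b1,b2,b3)" by (cases v)
  obtain r1 r2 r3 where r: "r = (r1,r2,r3)" by (cases r)
  have d: "r1*(a2*b3-a3*b2) + r2*(a3*b1-a1*b3) + r3*(a1*b2-a2*b1) = 0"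
    using assms(2) unfolding u v r det3_def dot3_def cross3_def by (simp add: algebra_simps)
  consider "a1*b2-a2*b1 \<noteq> 0" | "a2*b3-a3*b2 \<noteq> 0" | "a3*b1-a1*b3 \<noteq> 0"
    using assms(1) unfolding u v cross3_def by auto
  then show ?thesis
  proof cases
    case 1
    define w where "w = a1*b2-a2*b1"
    define X where "X = r1*b2-r2*b1"
    define Y where "Y = a1*r2-a2*r1"
    have w0: "w \<noteq> 0" using 1 w_def by simp
    have t1: "r1*w - (X*a1+Y*b1) = 0*(r1*(a2*b3-a3*b2) + r2*(a3*b1-a1*b3) + r3*(a1*b2-a2*b1))" unfolding w_def X_def Y_def by (simp add: algebra_simps)
    have e1: "r1 * w = X*a1 + Y*b1" using d t1 by simp
    have t2: "r2*w - (X*a2+Y*b2) = 0*(r1*(a2*b3-a3*b2) + r2*(a3*b1-a1*b3) + r3*(a1*b2-a2*b1))" unfolding w_def X_def Y_def by (simp add: algebra_simps)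
    have e2: "r2 * w = X*a2 + Y*b2" using d t2 by simp
    have t3: "r3*w - (X*a3+Y*b3) = 1*(r1*(a2*b3-a3*b2) + r2*(a3*b1-a1*b3) + r3*(a1*b2-a2*b1))" unfolding w_def X_def Y_def by (simp add: algebra_simps)
    have e3: "r3 * w = X*a3 + Y*b3" using d t3 by simp
    from e1 e2 e3 have "r1 = X/w*a1 + Y/w*b1" "r2 = X/w*a2 + Y/w*b2" "r3 = X/w*a3 + Y/w*b3"
      using w0 by (simp_all add: field_simps)
    then have "r = lc (X/w) u (Y/w) v" unfolding u v r lc_def by simp
    then show ?thesis by blast
  next
    case 2
    define w where "w = a2*b3-a3*b2"
    define X where "X = r2*b3-r3*b2"
    define Y where "Y = a2*r3-a3*r2"
    have w0: "w \<noteq> 0" using 2 w_def by simp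
    have t1: "r1*w - (X*a1+Y*b1) = 1*(r1*(a2*b3-a3*b2) + r2*(a3*b1-a1*b3) + r3*(a1*b2-a2*b1))" unfolding w_def X_def Y_def by (simp add: algebra_simps)
    have e1: "r1 * w = X*a1 + Y*b1" using d t1 by simp
    have t2: "r2*w - (X*a2+Y*b2) = 0*(r1*(a2*b3-a3*b2) + r2*(a3*b1-a1*b3) + r3*(a1*b2-a2*b1))" unfolding w_def X_def Y_def by (simp add: algebra_simps)
    have e2: "r2 * w = X*a2 + Y*b2" using d t2 by simp
    have t3: "r3*w - (X*a3+Y*b3) = 0*(r1*(a2*b3-a3*b2) + r2*(a3*b1-a1*b3) + r3*(a1*b2-a2*b1))" unfolding w_def X_def Y_def by (simp add: algebra_simps)
    have e3: "r3 * w = X*a3 + Y*b3" using d t3 by simp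
    from e1 e2 e3 have "r1 = X/w*a1 + Y/w*b1" "r2 = X/w*a2 + Y/w*b2" "r3 = X/w*a3 + Y/w*b3"
      using w0 by (simp_all add: field_simps)
    then have "r = lc (X/w) u (Y/w) v" unfolding u v r lc_def by simp
    then show ?thesis by blast
  next
    case 3
    define w where "w = a3*b1-a1*b3"
    define X where "X = r3*b1-r1*b3"
    define Y where "Y = a3*r1-a1*r3"
    have w0: "w \<noteq> 0" using 3 w_def by simp
    have t1: "r1*w - (X*a1+Y*b1) = 0*(r1*(a2*b3-a3*b2) + r2*(a3*b1-a1*b3) + r3*(a1*b2-a2*b1))" unfolding w_def X_def Y_def by (simp add: algebra_simps)
    have e1: "r1 * w = X*a1 + Y*b1" using d t1 by simp
    have t2: "r2*w - (X*a2+Y*b2) = 1*(r1*(a2*b3-a3*b2) + r2*(a3*b1-a1*b3) + r3*(a1*b2-a2*b1))" unfolding w_def X_def Y_def by (simp add: algebra_simps)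
    have e2: "r2 * w = X*a2 + Y*b2" using d t2 by simp
    have t3: "r3*w - (X*a3+Y*b3) = 0*(r1*(a2*b3-a3*b2) + r2*(a3*b1-a1*b3) + r3*(a1*b2-a2*b1))" unfolding w_def X_def Y_def by (simp add: algebra_simps)
    have e3: "r3 * w = X*a3 + Y*b3" using d t3 by simp
    from e1 e2 e3 have "r1 = X/w*a1 + Y/w*b1" "r2 = X/w*a2 + Y/w*b2" "r3 = X/w*a3 + Y/w*b3"
      using w0 by (simp_all add: field_simps)
    then have "r = lc (X/w) u (Y/w) v" unfolding u v r lc_def by simp
    then show ?thesis by blast
  qed
qed



lemma lc_zero: "lc 0 u \<beta> v = smult3 \<beta> v"
  by (cases u; cases v) (simp add: lc_def smult3_def)
lemma lc_scale: "\<alpha> \<noteq> 0 \<Longrightarrow> lc \<alpha> u \<beta> v = smult3 \<alpha> (lc 1 u (\<beta>/\<alpha>) v)"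
  by (cases u; cases v) (simp add: lc_def smult3_def field_simps)
lemma lc_one0: "lc 1 u 0 v = u"
  by (cases u; cases v) (simp add: lc_def)
lemma cross_lc_v: "cross3 (lc \<alpha> u \<beta> v) v = smult3 \<alpha> (cross3 u v)"
  by (cases u; cases v) (simp add: lc_def smult3_def cross3_def algebra_simps)
lemma cross_lc_u: "cross3 (lc \<alpha> u \<beta> v) u = smult3 (-\<beta>) (cross3 u v)"
  by (cases u; cases v) (simp add: lc_def smult3_def cross3_def algebra_simps)
lemma cross_smult: "cross3 (smult3 a x) (smult3 b y) = smult3 (a*b) (cross3 x y)"
  by (cases x; cases y) (simp add: smult3_def cross3_def algebra_simps)
lemma cross_lc1: "cross3 (lc 1 u t v) (lc 1 u s v) = smult3 (s-t) (cross3 u v)"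
  by (cases u; cases v) (simp add: lc_def smult3_def cross3_def algebra_simps)
lemma smult3_zero: "smult3 c w = (0,0,0) \<longleftrightarrow> c = 0 \<or> w = (0,0,0)"
  by (cases w) (auto simp: smult3_def)

lemma five:
  fixes Q :: "nat \<Rightarrow> nat \<Rightarrow> complex"
  defines "H \<equiv> quartic_eval Q"
  assumes uv: "cross3 u v \<noteq> (0,0,0)"
    and d3: "det3 u v q3 = 0" and d4: "det3 u v q4 = 0" and d5: "det3 u v q5 = 0"
    and n3: "cross3 q3 u \<noteq> (0,0,0)" "cross3 q3 v \<noteq> (0,0,0)"
    and n4: "cross3 q4 u \<noteq> (0,0,0)" "cross3 q4 v \<noteq> (0,0,0)"
    and n5: "cross3 q5 u \<noteq> (0,0,0)" "cross3 q5 v \<noteq> (0,0,0)"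
    and n34: "cross3 q3 q4 \<noteq> (0,0,0)" and n35: "cross3 q3 q5 \<noteq> (0,0,0)"
    and n45: "cross3 q4 q5 \<noteq> (0,0,0)"
    and z: "H u = 0" "H v = 0" "H q3 = 0" "H q4 = 0" "H q5 = 0"
    and dr: "det3 u v r = 0"
  shows "H r = 0"
proof -
  obtain u1 u2 u3 where u: "u = (u1,u2,u3)" by (cases u)
  obtain v1 v2 v3 where v: "v = (v1,v2,v3)" by (cases v)
  obtain h where h: "degree h \<le> 4" "coeff h 4 = H v"
    "\<And>t. quartic_eval Q (u1+t*v1, u2+t*v2, u3+t*v3) = poly h t"
    using linpoly[of Q v1 v2 v3 u1 u2 u3] unfolding H_def v by blast
  have hp: "H (lc 1 u t v) = poly h t" for t
    using h(3)[of t] unfolding H_def u v lc_def by simp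
  have root: "\<exists>t a. t \<noteq> 0 \<and> poly h t = 0 \<and> q = smult3 a (lc 1 u t v) \<and> a \<noteq> 0"
    if dq: "det3 u v q = 0" and nu: "cross3 q u \<noteq> (0,0,0)" and nv: "cross3 q v \<noteq> (0,0,0)"
      and zq: "H q = 0" for q
  proof -
    obtain \<alpha> \<beta> where q: "q = lc \<alpha> u \<beta> v" using decomp[OF uv dq] by blast
    have a0: "\<alpha> \<noteq> 0" using nv unfolding q cross_lc_v smult3_zero by auto
    have b0: "\<beta> \<noteq> 0" using nu unfolding q cross_lc_u smult3_zero by auto
    have qs: "q = smult3 \<alpha> (lc 1 u (\<beta>/\<alpha>) v)" using q lc_scale[OF a0] by simp
    have "\<alpha>^4 * H (lc 1 u (\<beta>/\<alpha>) v) = 0" using zq qs homog unfolding H_def by metis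
    then have "poly h (\<beta>/\<alpha>) = 0" using a0 hp by simp
    moreover have "\<beta>/\<alpha> \<noteq> 0" using a0 b0 by simp
    ultimately show ?thesis using qs a0 by blast
  qed
  obtain t3 a3 where r3: "t3 \<noteq> 0" "poly h t3 = 0" "q3 = smult3 a3 (lc 1 u t3 v)" "a3 \<noteq> 0"
    using root[OF d3 n3 z(3)] by blast
  obtain t4 a4 where r4: "t4 \<noteq> 0" "poly h t4 = 0" "q4 = smult3 a4 (lc 1 u t4 v)" "a4 \<noteq> 0"
    using root[OF d4 n4 z(4)] by blast
  obtain t5 a5 where r5: "t5 \<noteq> 0" "poly h t5 = 0" "q5 = smult3 a5 (lc 1 u t5 v)" "a5 \<noteq> 0"
    using root[OF d5 n5 z(5)] by blast
  have dist: "t3 \<noteq> t4" if "cross3 (smult3 a3 (lc 1 u t3 v)) (smult3 a4 (lc 1 u t4 v)) \<noteq> (0,0,0)"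
    for a3 a4 t3 t4
    using that unfolding cross_smult cross_lc1 smult3_zero by auto
  have t34: "t3 \<noteq> t4" using dist n34 r3 r4 by metis
  have t35: "t3 \<noteq> t5" using dist n35 r3 r5 by metis
  have t45: "t4 \<noteq> t5" using dist n45 r4 r5 by metis
  have h0: "poly h 0 = 0" using hp[of 0] z(1) by (simp add: lc_one0)
  have "card {0, t3, t4, t5} \<ge> 4" using t34 t35 t45 r3(1) r4(1) r5(1) by simp
  moreover have "coeff h 4 = coeff 0 4" using h(2) z(2) by simp
  ultimately have hz: "h = 0"
    by (intro poly_eqI_degree_lead_coeff[of h 4 0 "{0,t3,t4,t5}"])
       (use h(1) h0 r3(2) r4(2) r5(2) in auto)
  obtain \<alpha> \<beta> where r: "r = lc \<alpha> u \<beta> v" using decomp[OF uv dr] by blast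
  show ?thesis
  proof (cases "\<alpha> = 0")
    case True
    then show ?thesis using r lc_zero homog z(2) unfolding H_def by simp
  next
    case False
    then show ?thesis using r lc_scale[OF False] homog hp hz unfolding H_def by simp
  qed
qed



lemma id1_: "cross3 (cross3 (l1,l2,l3) (a1,a2,a3)) (cross3 (l1,l2,l3) (b1,b2,b3)) = smult3 (det3 (l1,l2,l3) (a1,a2,a3) (b1,b2,b3)) (l1,l2,l3)"
  unfolding cross3_def det3_def dot3_def smult3_def by simp (intro conjI; algebra)
lemma id1: "cross3 (cross3 l a) (cross3 l b) = smult3 (det3 l a b) l"
  by (cases l; cases a; cases b) (simp only: id1_)
lemma id2_: "det3 (cross3 (l1,l2,l3) (a1,a2,a3)) (cross3 (l1,l2,l3) (b1,b2,b3)) (cross3 (l1,l2,l3) (c1,c2,c3)) = 0"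
  unfolding cross3_def det3_def dot3_def by simp algebra
lemma id2: "det3 (cross3 l a) (cross3 l b) (cross3 l c) = 0"
  by (cases l; cases a; cases b; cases c) (simp only: id2_)
lemma id3_: "det3 (cross3 (l1,l2,l3) (a1,a2,a3)) (cross3 (l1,l2,l3) (b1,b2,b3)) (r1,r2,r3) = det3 (l1,l2,l3) (a1,a2,a3) (b1,b2,b3) * dot3 (l1,l2,l3) (r1,r2,r3)"
  unfolding cross3_def det3_def dot3_def by simp algebra
lemma id3: "det3 (cross3 l a) (cross3 l b) r = det3 l a b * dot3 l r"
  by (cases l; cases a; cases b; cases r) (simp only: id3_)
lemma id4: "dot3 l (cross3 l a) = 0"
  by (cases l; cases a) (simp add: cross3_def dot3_def algebra_simps)
lemma cross_anti: "cross3 b a = smult3 (-1) (cross3 a b)"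
  by (cases a; cases b) (simp add: cross3_def smult3_def algebra_simps)
lemma det_swap_: "det3 (l1,l2,l3) (b1,b2,b3) (a1,a2,a3) = - det3 (l1,l2,l3) (a1,a2,a3) (b1,b2,b3)"
  unfolding cross3_def det3_def dot3_def by simp algebra
lemma det_swap: "det3 l b a = - det3 l a b"
  by (cases l; cases a; cases b) (simp add: det3_def dot3_def cross3_def algebra_simps)
lemma id5_: "cross3 (l1,l2,l3) (cross3 (p1,p2,p3) (s1,s2,s3)) = lc (dot3 (l1,l2,l3) (s1,s2,s3)) (p1,p2,p3) (- dot3 (l1,l2,l3) (p1,p2,p3)) (s1,s2,s3)"
  unfolding cross3_def dot3_def lc_def by simp (intro conjI; algebra)
lemma id5: "cross3 l (cross3 p s) = lc (dot3 l s) p (- dot3 l p) s"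
  by (cases l; cases p; cases s) (simp only: id5_)
lemma id6_: "det3 (cross3 (p1,p2,p3) (d1,d2,d3)) (a1,a2,a3) (b1,b2,b3) = det3 (p1,p2,p3) (d1,d2,d3) (cross3 (a1,a2,a3) (b1,b2,b3))"
  unfolding cross3_def det3_def dot3_def by simp algebra
lemma id6: "det3 (cross3 p d) a b = det3 p d (cross3 a b)"
  by (cases p; cases d; cases a; cases b) (simp only: id6_)
lemma id7: "dot3 (cross3 p d) p = 0"
  by (cases p; cases d) (simp add: cross3_def dot3_def algebra_simps)
lemma id8: "det3 a b c = dot3 a (cross3 b c)" by (simp add: det3_def)

lemma nz_cross: "l \<noteq> (0,0,0) \<Longrightarrow> det3 l a b \<noteq> 0 \<Longrightarrow> cross3 (cross3 l a) (cross3 l b) \<noteq> (0,0,0)"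
  unfolding id1 smult3_zero by simp

lemma H_neg: "quartic_eval Q (smult3 (-1) p) = quartic_eval Q p"
  using homog[of Q "-1" p] by simp

lemma five_line:
  fixes Q :: "nat \<Rightarrow> nat \<Rightarrow> complex"
  defines "H \<equiv> quartic_eval Q"
  assumes l: "l \<noteq> (0,0,0)"
    and d12: "det3 l a1 a2 \<noteq> 0" and d13: "det3 l a1 a3 \<noteq> 0" and d14: "det3 l a1 a4 \<noteq> 0"
    and d15: "det3 l a1 a5 \<noteq> 0" and d23: "det3 l a2 a3 \<noteq> 0" and d24: "det3 l a2 a4 \<noteq> 0"
    and d25: "det3 l a2 a5 \<noteq> 0" and d34: "det3 l a3 a4 \<noteq> 0" and d35: "det3 l a3 a5 \<noteq> 0"
    and d45: "det3 l a4 a5 \<noteq> 0"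
    and z: "H (cross3 l a1) = 0" "H (cross3 l a2) = 0" "H (cross3 l a3) = 0"
      "H (cross3 l a4) = 0" "H (cross3 l a5) = 0"
    and r: "dot3 l r = 0"
  shows "H r = 0"
proof -
  have sw: "det3 l b a \<noteq> 0" if "det3 l a b \<noteq> 0" for a b
  proof -
    have "det3 l b a = - det3 l a b" by (rule det_swap)
    then show ?thesis using that by simp
  qed
  have nc: "cross3 (cross3 l a) (cross3 l b) \<noteq> (0,0,0)" if "det3 l a b \<noteq> 0" for a b
    using nz_cross[OF l that] .
  show ?thesis unfolding H_def
  proof (rule five[of "cross3 l a1" "cross3 l a2" "cross3 l a3" "cross3 l a4" "cross3 l a5"])
    show "cross3 (cross3 l a1) (cross3 l a2) \<noteq> (0,0,0)" by (rule nc[OF d12])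
    show "det3 (cross3 l a1) (cross3 l a2) (cross3 l a3) = 0" by (rule id2)
    show "det3 (cross3 l a1) (cross3 l a2) (cross3 l a4) = 0" by (rule id2)
    show "det3 (cross3 l a1) (cross3 l a2) (cross3 l a5) = 0" by (rule id2)
    show "cross3 (cross3 l a3) (cross3 l a1) \<noteq> (0,0,0)" by (rule nc[OF sw[OF d13]])
    show "cross3 (cross3 l a3) (cross3 l a2) \<noteq> (0,0,0)" by (rule nc[OF sw[OF d23]])
    show "cross3 (cross3 l a4) (cross3 l a1) \<noteq> (0,0,0)" by (rule nc[OF sw[OF d14]])
    show "cross3 (cross3 l a4) (cross3 l a2) \<noteq> (0,0,0)" by (rule nc[OF sw[OF d24]])
    show "cross3 (cross3 l a5) (cross3 l a1) \<noteq> (0,0,0)" by (rule nc[OF sw[OF d15]])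
    show "cross3 (cross3 l a5) (cross3 l a2) \<noteq> (0,0,0)" by (rule nc[OF sw[OF d25]])
    show "cross3 (cross3 l a3) (cross3 l a4) \<noteq> (0,0,0)" by (rule nc[OF d34])
    show "cross3 (cross3 l a3) (cross3 l a5) \<noteq> (0,0,0)" by (rule nc[OF d35])
    show "cross3 (cross3 l a4) (cross3 l a5) \<noteq> (0,0,0)" by (rule nc[OF d45])
    show "det3 (cross3 l a1) (cross3 l a2) r = 0" unfolding id3 r by simp
  qed (use z in \<open>simp_all add: H_def\<close>)
qed

lemma line_pt:
  fixes Q :: "nat \<Rightarrow> nat \<Rightarrow> complex"
  assumes z: "\<forall>b. quartic_eval Q (cross3 l b) = 0" and l: "l \<noteq> (0,0,0)" and p: "dot3 l p = 0"
  shows "quartic_eval Q p = 0"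
proof -
  obtain l1 l2 l3 where ll: "l = (l1,l2,l3)" by (cases l)
  obtain s where s: "dot3 l s \<noteq> 0"
  proof -
    consider "l1 \<noteq> 0" | "l2 \<noteq> 0" | "l3 \<noteq> 0" using l ll by auto
    then show ?thesis
    proof cases
      case 1 then show ?thesis using that[of "(1,0,0)"] ll by (simp add: dot3_def)
    next
      case 2 then show ?thesis using that[of "(0,1,0)"] ll by (simp add: dot3_def)
    next
      case 3 then show ?thesis using that[of "(0,0,1)"] ll by (simp add: dot3_def)
    qed
  qed
  have e: "cross3 l (cross3 p s) = smult3 (dot3 l s) p"
    unfolding id5 p by (cases s; cases p) (simp add: smult3_def lc_def)
  have "quartic_eval Q (cross3 l (cross3 p s)) = 0" using z by blast
  then have "quartic_eval Q (smult3 (dot3 l s) p) = 0" by (simp only: e)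
  then have "(dot3 l s)^4 * quartic_eval Q p = 0" by (simp only: homog)
  then show ?thesis using s by simp
qed



definition fpol :: "pt \<Rightarrow> complex poly" where
  "fpol w = [:fst w, fst (snd w), snd (snd w):]"

lemma fpol_nz: "w \<noteq> (0,0,0) \<Longrightarrow> fpol w \<noteq> 0"
  by (cases w) (auto simp: fpol_def)

lemma det_fpol: "det3 p (1, s, s^2) P = poly (fpol (cross3 P p)) s"
  by (cases p; cases P) (simp add: fpol_def det3_def dot3_def cross3_def algebra_simps power2_eq_square)

lemma dot_smult: "dot3 l (smult3 c x) = c * dot3 l x"
  by (cases l; cases x) (simp add: dot3_def smult3_def algebra_simps)

lemma det_zero1: "det3 (0,0,0) a b = 0"
  by (cases a; cases b) (simp add: det3_def dot3_def cross3_def)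

lemma pt_off:
  assumes "cross3 l m \<noteq> (0,0,0)" "dot3 l p \<noteq> 0"
  shows "cross3 (cross3 l m) p \<noteq> (0,0,0)"
proof
  assume "cross3 (cross3 l m) p = (0,0,0)"
  then obtain c where "p = smult3 c (cross3 l m)" using cross_prop assms(1) by blast
  then have "dot3 l p = 0" by (simp add: dot_smult id4)
  then show False using assms(2) by simp
qed

lemma everywhere:
  fixes Q :: "nat \<Rightarrow> nat \<Rightarrow> complex" and l :: "nat \<Rightarrow> pt"
  defines "H \<equiv> quartic_eval Q"
  assumes nl: "\<And>i. i < 5 \<Longrightarrow> l i \<noteq> (0,0,0)"
    and nc: "\<And>i j. i < 5 \<Longrightarrow> j < 5 \<Longrightarrow> i \<noteq> j \<Longrightarrow> cross3 (l i) (l j) \<noteq> (0,0,0)"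
    and z: "\<And>i b. i < 5 \<Longrightarrow> H (cross3 (l i) b) = 0"
  shows "H p = 0"
proof (cases "\<exists>i<5. dot3 (l i) p = 0")
  case True
  then obtain i where "i < 5" "dot3 (l i) p = 0" by blast
  then show ?thesis using line_pt[of Q "l i" p] z nl unfolding H_def by blast
next
  case False
  define W where "W = {cross3 (cross3 (l i) (l j)) p | i j. i < 5 \<and> j < 5 \<and> i \<noteq> j}"
  have fW: "finite W"
  proof -
    have "W = (\<lambda>(i,j). cross3 (cross3 (l i) (l j)) p) ` {(i,j). i < 5 \<and> j < 5 \<and> i \<noteq> j}"
      unfolding W_def by auto
    moreover have "finite {(i,j). i < (5::nat) \<and> j < 5 \<and> i \<noteq> j}"
      by (rule finite_subset[of _ "{..<5} \<times> {..<5}"]) auto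
    ultimately show ?thesis by simp
  qed
  have Wnz: "w \<noteq> (0,0,0)" if wW: "w \<in> W" for w
  proof -
    obtain i j where ij: "i < 5" "j < 5" "i \<noteq> j" "w = cross3 (cross3 (l i) (l j)) p"
      using wW unfolding W_def by blast
    have "dot3 (l i) p \<noteq> 0" using False ij(1) by blast
    then show ?thesis using pt_off[OF nc[OF ij(1-3)]] ij(4) by simp
  qed
  define Bad where "Bad = (\<Union>w\<in>W. {s. poly (fpol w) s = 0})"
  have "finite Bad" unfolding Bad_def
  proof (rule finite_UN_I[OF fW])
    fix w assume "w \<in> W"
    then show "finite {s. poly (fpol w) s = 0}" using Wnz fpol_nz poly_roots_finite by blast
  qed
  then obtain s where s: "s \<notin> Bad" using ex_new_if_finite[OF infinite_UNIV_char_0] by blast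
  define d :: pt where "d = (1, s, s^2)"
  define M where "M = cross3 p d"
  have dM: "det3 M (l i) (l j) \<noteq> 0" if "i < 5" "j < 5" "i \<noteq> j" for i j
  proof -
    have "cross3 (cross3 (l i) (l j)) p \<in> W" unfolding W_def using that by blast
    then have "poly (fpol (cross3 (cross3 (l i) (l j)) p)) s \<noteq> 0" using s unfolding Bad_def by blast
    then show ?thesis unfolding M_def id6 d_def det_fpol .
  qed
  have M0: "M \<noteq> (0,0,0)" using dM[of 0 1] det_zero1[of "l 0" "l 1"] by auto
  have zM: "H (cross3 M (l i)) = 0" if "i < 5" for i
  proof -
    have "cross3 M (l i) = smult3 (-1) (cross3 (l i) M)" by (rule cross_anti)
    then have "H (cross3 M (l i)) = H (cross3 (l i) M)" unfolding H_def by (simp only: H_neg)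
    then show ?thesis using z[OF that] by simp
  qed
  show ?thesis unfolding H_def
    apply (rule five_line[of M "l 0" "l 1" "l 2" "l 3" "l 4"])
    using M0 apply assumption
    using dM apply simp_all[10]
    using zM[unfolded H_def] apply simp_all[5]
    unfolding M_def by (rule id7)
qed



lemma chain:
  fixes Q :: "nat \<Rightarrow> nat \<Rightarrow> complex" and l :: "nat \<Rightarrow> pt"
  defines "H \<equiv> quartic_eval Q"
  assumes hd: "\<forall>i<7. \<forall>j<7. \<forall>k<7. i \<noteq> j \<and> j \<noteq> k \<and> i \<noteq> k \<longrightarrow> det3 (l i) (l j) (l k) \<noteq> 0"
    and res: "\<forall>i j. nonconsec7 i j \<longrightarrow> H (cross3 (l i) (l j)) = 0"
    and z0: "\<forall>b. H (cross3 (l 0) b) = 0"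
  shows "H p = 0"
proof -
  have D: "det3 (l i) (l j) (l k) \<noteq> 0" if "i<7" "j<7" "k<7" "i \<noteq> j" "j \<noteq> k" "i \<noteq> k" for i j k
    using hd that by blast
  have R: "H (cross3 (l i) (l j)) = 0" if "nonconsec7 i j" for i j using res that by blast
  have onl: "H (cross3 (l i) (l j)) = 0" if "\<forall>b. H (cross3 (l j) b) = 0" for i j
  proof -
    have "cross3 (l i) (l j) = smult3 (-1) (cross3 (l j) (l i))" by (rule cross_anti)
    then have "H (cross3 (l i) (l j)) = H (cross3 (l j) (l i))" unfolding H_def by (simp only: H_neg)
    then show ?thesis using that by simp
  qed
  have nzl: "l i \<noteq> (0,0,0)" if "i < 7" "j < 7" "k < 7" "i \<noteq> j" "j \<noteq> k" "i \<noteq> k" for i j k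
    using D[OF that] det_zero1[of "l j" "l k"] by auto
  have step: "\<forall>b. H (cross3 (l i) b) = 0"
    if "i<7" "a1<7" "a2<7" "a3<7" "a4<7" "a5<7" "distinct [i,a1,a2,a3,a4,a5]"
      "H (cross3 (l i) (l a1)) = 0" "H (cross3 (l i) (l a2)) = 0" "H (cross3 (l i) (l a3)) = 0"
      "H (cross3 (l i) (l a4)) = 0" "H (cross3 (l i) (l a5)) = 0"
    for i a1 a2 a3 a4 a5
  proof
    fix b
    show "H (cross3 (l i) b) = 0" unfolding H_def
      apply (rule five_line[of "l i" "l a1" "l a2" "l a3" "l a4" "l a5"])
      using nzl[of i a1 a2] that apply simp
      using D that apply simp_all[10]
      using that unfolding H_def apply simp_all[5]
      by (rule id4)
  qed
  have nc: "\<And>a b. nonconsec7 a b \<Longrightarrow> nonconsec7 a b" by simp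
  have z1: "\<forall>b. H (cross3 (l 1) b) = 0"
    by (rule step[of 1 0 3 4 5 6]) (use onl z0 R in \<open>simp_all add: nonconsec7_def\<close>)
  have z2: "\<forall>b. H (cross3 (l 2) b) = 0"
    by (rule step[of 2 0 1 4 5 6]) (use onl z0 z1 R in \<open>simp_all add: nonconsec7_def\<close>)
  have z3: "\<forall>b. H (cross3 (l 3) b) = 0"
    by (rule step[of 3 0 1 2 5 6]) (use onl z0 z1 z2 R in \<open>simp_all add: nonconsec7_def\<close>)
  have z4: "\<forall>b. H (cross3 (l 4) b) = 0"
    by (rule step[of 4 0 1 2 3 6]) (use onl z0 z1 z2 z3 R in \<open>simp_all add: nonconsec7_def\<close>)
  show ?thesis unfolding H_def
  proof (rule everywhere[of l Q p])
    fix i assume "i < (5::nat)"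
    then show "l i \<noteq> (0,0,0)"
      using nzl[of i 5 6] by simp
  next
    fix i j assume ij: "i < (5::nat)" "j < 5" "i \<noteq> j"
    have "det3 (l 5) (l i) (l j) \<noteq> 0" using D[of 5 i j] ij by simp
    then show "cross3 (l i) (l j) \<noteq> (0,0,0)" unfolding det3_def
      by (cases "l 5") (auto simp: dot3_def)
  next
    fix i b assume "i < (5::nat)"
    then have "i = 0 \<or> i = 1 \<or> i = 2 \<or> i = 3 \<or> i = 4" by auto
    then show "quartic_eval Q (cross3 (l i) b) = 0"
      using spec[OF z0, of b] spec[OF z1, of b] spec[OF z2, of b] spec[OF z3, of b] spec[OF z4, of b]
      unfolding H_def by auto
  qed
qed



definition Qk :: "nat \<Rightarrow> nat \<Rightarrow> complex" where
  "Qk a b = (if (a = 3 \<and> b = 1) \<or> (a = 0 \<and> b = 3) \<or> (a = 1 \<and> b = 0) then 1 else 0)"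

lemma klein_eq0: "quartic_eval Qk (x,y,z) = x^3*y + y^3*z + z^3*x"
  unfolding quartic_eval_def by (simp add: Qk_def atMost_nat_numeral)

lemma klein_eq: "klein = quartic_eval Qk"
proof
  fix p :: pt
  obtain x y z where p: "p = (x,y,z)" by (cases p)
  show "klein p = quartic_eval Qk p" unfolding p klein_eq0 klein_def by simp
qed

lemma klein_homog: "klein (smult3 c p) = c^4 * klein p"
  unfolding klein_eq by (rule homog)

lemma phi_pow: "(phi \<zeta> ^^ k) (x,y,z) = (\<zeta>^(4*k) * x, \<zeta>^(2*k) * y, \<zeta>^k * z)"
  by (induction k) (simp_all add: phi_def power_add mult_ac power2_eq_square)

lemma klein_phi: "\<zeta>^7 = 1 \<Longrightarrow> klein (phi \<zeta> p) = klein p"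
proof -
  assume z: "\<zeta>^7 = 1"
  obtain x y w where p: "p = (x,y,w)" by (cases p)
  have "\<zeta>^14 = \<zeta>^7 * \<zeta>^7" by (simp flip: power_add)
  then have a: "\<zeta>^14 = 1" using z by simp
  have "klein (phi \<zeta> p) = \<zeta>^14 * (x^3*y) + \<zeta>^7 * (y^3*w) + \<zeta>^7 * (w^3*x)"
    unfolding p klein_def phi_def by simp algebra
  then show ?thesis using z a unfolding p klein_def by simp
qed

definition dm :: "complex \<Rightarrow> pt \<Rightarrow> pt" where
  "dm \<zeta> w = (case w of (a,b,c) \<Rightarrow> (\<zeta>^3*a, \<zeta>^5*b, \<zeta>^6*c))"

lemma cross_phi_: "cross3 (phi \<zeta> (a1,a2,a3)) (phi \<zeta> (b1,b2,b3)) = dm \<zeta> (cross3 (a1,a2,a3) (b1,b2,b3))"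
  unfolding phi_def dm_def cross3_def by simp (intro conjI; algebra)
lemma cross_phi: "cross3 (phi \<zeta> a) (phi \<zeta> b) = dm \<zeta> (cross3 a b)"
  by (cases a; cases b) (simp only: cross_phi_)

lemma cross_dm_:
  assumes z: "\<zeta>^7 = 1"
  shows "cross3 (dm \<zeta> (a1,a2,a3)) (dm \<zeta> (b1,b2,b3)) = phi \<zeta> (cross3 (a1,a2,a3) (b1,b2,b3))"
proof -
  have "\<zeta>^11 = \<zeta>^7 * \<zeta>^4" "\<zeta>^9 = \<zeta>^7 * \<zeta>^2" "\<zeta>^8 = \<zeta>^7 * \<zeta>" by (simp_all flip: power_add power_Suc2)
  then have e: "\<zeta>^11 = \<zeta>^4" "\<zeta>^9 = \<zeta>^2" "\<zeta>^8 = \<zeta>" using z by simp_all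
  have "cross3 (dm \<zeta> (a1,a2,a3)) (dm \<zeta> (b1,b2,b3)) =
     (\<zeta>^11 * (a2*b3 - a3*b2), \<zeta>^9 * (a3*b1 - a1*b3), \<zeta>^8 * (a1*b2 - a2*b1))"
    unfolding dm_def cross3_def by simp (intro conjI; algebra)
  then show ?thesis unfolding e phi_def cross3_def by simp
qed
lemma cross_dm: "\<zeta>^7 = 1 \<Longrightarrow> cross3 (dm \<zeta> a) (dm \<zeta> b) = phi \<zeta> (cross3 a b)"
  by (cases a; cases b) (simp only: cross_dm_)

lemma tri_: "cross3 (cross3 (a1,a2,a3) (b1,b2,b3)) (cross3 (b1,b2,b3) (c1,c2,c3)) = smult3 (det3 (a1,a2,a3) (b1,b2,b3) (c1,c2,c3)) (b1,b2,b3)"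
  unfolding cross3_def det3_def dot3_def smult3_def by simp (intro conjI; algebra)
lemma tri: "cross3 (cross3 a b) (cross3 b c) = smult3 (det3 a b c) b"
  by (cases a; cases b; cases c) (simp only: tri_)

lemma dot_comm: "dot3 a b = dot3 b a"
  by (cases a; cases b) (simp add: dot3_def mult.commute)

lemma klein_cross_zero:
  assumes "dot3 A q = 0" "dot3 B q = 0" "q \<noteq> (0,0,0)" "klein q = 0"
  shows "klein (cross3 A B) = 0"
proof -
  have "cross3 q (cross3 A B) = lc (dot3 q B) A (- dot3 q A) B" by (rule id5)
  also have "\<dots> = lc 0 A 0 B" using assms(1,2) dot_comm[of q A] dot_comm[of q B] by simp
  also have "\<dots> = (0,0,0)" by (simp add: lc_zero smult3_def)
  finally obtain c where "cross3 A B = smult3 c q" using cross_prop assms(3) by blast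
  then show ?thesis using assms(4) klein_homog by simp
qed

lemma klein_sym: "klein (cross3 b a) = klein (cross3 a b)"
  using cross_anti[of b a] klein_homog[of "-1"] by simp

lemma det_cross: "det3 k a b \<noteq> 0 \<Longrightarrow> cross3 a b \<noteq> (0,0,0)"
  by (cases k) (auto simp: det3_def dot3_def)

lemma xfresh:
  assumes "cross3 l m \<noteq> (0,0,0)" "klein (cross3 l m) = 0" "klein (cross3 l b) \<noteq> 0"
  shows "det3 l m b \<noteq> 0"
proof
  assume "det3 l m b = 0"
  then have "cross3 (cross3 l m) (cross3 l b) = (0,0,0)" unfolding id1 by (simp add: smult3_def)
  then obtain c where "cross3 l b = smult3 c (cross3 l m)" using cross_prop assms(1) by blast
  then show False using assms(2,3) klein_homog by simp
qed



theorem lemma5p2: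
  fixes \<zeta> :: complex and p1 :: pt
  assumes zeta: "\<zeta> ^ 7 = 1" "\<zeta> \<noteq> 1"
    and p1C: "on_klein p1"
    and p1e: "\<not> proj_eq p1 e1" "\<not> proj_eq p1 e2" "\<not> proj_eq p1 e3"
  defines "P \<equiv> (\<lambda>k::nat. (phi \<zeta> ^^ k) p1)"
  defines "L \<equiv> (\<lambda>i. [line_through (P 5) (P 0), line_through (P 6) (P 1),
                      line_through (P 0) (P 2), line_through (P 1) (P 3),
                      line_through (P 2) (P 4), line_through (P 3) (P 5),
                      line_through (P 4) (P 6)] ! i)"
  assumes meetC: "\<exists>q. on_klein q \<and> on_line q (line_through (P 0) (P 2))
                              \<and> on_line q (line_through (P 4) (P 6))"
    and hept: "heptagon L"
  shows "is_adjoint L klein"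
proof -
  have z7: "\<zeta>^7 = 1" by (rule zeta(1))
  have Pk: "P (Suc k) = phi \<zeta> (P k)" for k unfolding P_def by simp
  have P7: "P 7 = P 0"
  proof -
    obtain x y z where p: "p1 = (x,y,z)" by (cases p1)
    have "\<zeta>^14 = \<zeta>^7 * \<zeta>^7" "\<zeta>^28 = \<zeta>^14 * \<zeta>^14" by (simp_all flip: power_add)
    then have "\<zeta>^14 = 1" "\<zeta>^28 = 1" using z7 by simp_all
    then show ?thesis using z7 unfolding P_def p phi_pow by simp
  qed
  have KP: "klein (P k) = 0" for k
  proof (induction k)
    case 0 then show ?case using p1C unfolding P_def on_klein_def by simp
  next
    case (Suc k) then show ?case using Pk klein_phi[OF z7] by simp
  qed
  have L0: "L 0 = cross3 (P 5) (P 0)" and L1: "L 1 = cross3 (P 6) (P 1)"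
    and L2: "L 2 = cross3 (P 0) (P 2)" and L3: "L 3 = cross3 (P 1) (P 3)"
    and L4: "L 4 = cross3 (P 2) (P 4)" and L5: "L 5 = cross3 (P 3) (P 5)"
    and L6: "L 6 = cross3 (P 4) (P 6)"
    unfolding L_def line_through_def by simp_all
  have Kt: "klein (cross3 (cross3 a (P k)) (cross3 (P k) b)) = 0" for a b k
    unfolding tri klein_homog KP by simp
  have K02: "klein (cross3 (L 0) (L 2)) = 0" unfolding L0 L2 by (rule Kt)
  have K13: "klein (cross3 (L 1) (L 3)) = 0" unfolding L1 L3 by (rule Kt)
  have K24: "klein (cross3 (L 2) (L 4)) = 0" unfolding L2 L4 by (rule Kt)
  have K35: "klein (cross3 (L 3) (L 5)) = 0" unfolding L3 L5 by (rule Kt)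
  have K46: "klein (cross3 (L 4) (L 6)) = 0" unfolding L4 L6 by (rule Kt)
  have K50: "klein (cross3 (L 5) (L 0)) = 0" unfolding L5 L0 by (rule Kt)
  have K61: "klein (cross3 (L 6) (L 1)) = 0" unfolding L6 L1 by (rule Kt)
  have s: "Suc 0 = 1" "Suc 1 = 2" "Suc 2 = 3" "Suc 3 = 4" "Suc 4 = 5" "Suc 5 = 6" "Suc 6 = 7"
    by simp_all
  have P6: "P 6 = phi \<zeta> (P 5)" using Pk[of 5] unfolding s .
  have P1: "P 1 = phi \<zeta> (P 0)" using Pk[of 0] unfolding s .
  have P2: "P 2 = phi \<zeta> (P 1)" using Pk[of 1] unfolding s .
  have P3: "P 3 = phi \<zeta> (P 2)" using Pk[of 2] unfolding s .
  have P4: "P 4 = phi \<zeta> (P 3)" using Pk[of 3] unfolding s .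
  have P5: "P 5 = phi \<zeta> (P 4)" using Pk[of 4] unfolding s .
  have P0: "P 0 = phi \<zeta> (P 6)" using Pk[of 6] P7 unfolding s by simp
  have D1: "L 1 = dm \<zeta> (L 0)" unfolding L1 L0 P6 P1 by (rule cross_phi)
  have D2: "L 2 = dm \<zeta> (L 1)" unfolding L2 L1 P0 P2 by (rule cross_phi)
  have D3: "L 3 = dm \<zeta> (L 2)" unfolding L3 L2 P1 P3 by (rule cross_phi)
  have D4: "L 4 = dm \<zeta> (L 3)" unfolding L4 L3 P2 P4 by (rule cross_phi)
  have D5: "L 5 = dm \<zeta> (L 4)" unfolding L5 L4 P3 P5 by (rule cross_phi)
  have D6: "L 6 = dm \<zeta> (L 5)" unfolding L6 L5 P4 P6 by (rule cross_phi)
  have D0: "L 0 = dm \<zeta> (L 6)" unfolding L0 L6 P5 P0 by (rule cross_phi)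
  have sh: "klein (cross3 (dm \<zeta> A) (dm \<zeta> B)) = klein (cross3 A B)" for A B
    unfolding cross_dm[OF z7] klein_phi[OF z7] ..
  have K62: "klein (cross3 (L 6) (L 2)) = 0"
  proof -
    obtain q where q: "on_klein q" "on_line q (line_through (P 0) (P 2))"
      "on_line q (line_through (P 4) (P 6))" using meetC by blast
    show ?thesis
      by (rule klein_cross_zero[of _ q]) (use q in \<open>auto simp: L2 L6 on_line_def on_klein_def nz_def line_through_def\<close>)
  qed
  have K03: "klein (cross3 (L 0) (L 3)) = 0" using K62 unfolding D0 D3 sh .
  have K14: "klein (cross3 (L 1) (L 4)) = 0" using K03 unfolding D1 D4 sh .
  have K25: "klein (cross3 (L 2) (L 5)) = 0" using K14 unfolding D2 D5 sh .
  have K36: "klein (cross3 (L 3) (L 6)) = 0" using K25 unfolding D3 D6 sh .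
  have K40: "klein (cross3 (L 4) (L 0)) = 0" using K36 unfolding D4 D0 sh .
  have K51: "klein (cross3 (L 5) (L 1)) = 0" using K40 unfolding D5 D1 sh .
  have Kall: "klein (cross3 (L i) (L j)) = 0" if "nonconsec7 i j" for i j
  proof -
    have i: "i = 0 \<or> i = 1 \<or> i = 2 \<or> i = 3 \<or> i = 4 \<or> i = 5 \<or> i = 6"
      using that unfolding nonconsec7_def by auto
    have j: "j = 0 \<or> j = 1 \<or> j = 2 \<or> j = 3 \<or> j = 4 \<or> j = 5 \<or> j = 6"
      using that unfolding nonconsec7_def by auto
    show ?thesis
      using i j that K02 K13 K24 K35 K46 K50 K61 K62 K03 K14 K25 K36 K40 K51
      by (auto simp: nonconsec7_def klein_sym)
  qed
  have hd: "\<forall>i<7. \<forall>j<7. \<forall>k<7. i \<noteq> j \<and> j \<noteq> k \<and> i \<noteq> k \<longrightarrow> det3 (L i) (L j) (L k) \<noteq> 0"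
    using hept unfolding heptagon_def by blast
  have adj: "q \<in> adjoint_points L \<longleftrightarrow> (\<exists>i j. nonconsec7 i j \<and> q = cross3 (L i) (L j))" for q
    unfolding adjoint_points_def meet_def by blast
  show ?thesis unfolding is_adjoint_def
  proof (intro conjI allI impI)
    show "is_quartic_form klein" unfolding is_quartic_form_def klein_eq
      by (intro exI[of _ Qk] conjI exI[of _ "3::nat"] exI[of _ "1::nat"]) (simp_all add: Qk_def)
  next
    show "\<forall>q\<in>adjoint_points L. klein q = 0" unfolding Ball_def adj using Kall by auto
  next
    fix G assume G: "is_quartic_form G \<and> (\<forall>q\<in>adjoint_points L. G q = 0)"
    obtain QG where QG: "G = quartic_eval QG" using G unfolding is_quartic_form_def by blast
    have GR: "\<forall>i j. nonconsec7 i j \<longrightarrow> quartic_eval QG (cross3 (L i) (L j)) = 0"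
      using G adj QG by blast
    have "\<exists>b. klein (cross3 (L 0) b) \<noteq> 0"
    proof (rule ccontr)
      assume "\<not> ?thesis"
      then have z0: "\<forall>b. quartic_eval Qk (cross3 (L 0) b) = 0" unfolding klein_eq by simp
      have "quartic_eval Qk (1,1,1) = 0"
        by (rule chain[OF hd _ z0]) (use Kall in \<open>simp add: klein_eq\<close>)
      then show False unfolding klein_eq0 by simp
    qed
    then obtain b where b: "klein (cross3 (L 0) b) \<noteq> 0" by blast
    define x where "x = cross3 (L 0) b"
    define c where "c = G x / klein x"
    define QH where "QH = (\<lambda>a b. QG a b - c * Qk a b)"
    have Hev: "quartic_eval QH p = G p - c * klein p" for p
      unfolding QH_def QG klein_eq by (rule qf_comb[symmetric])
    have Hx: "quartic_eval QH x = 0" using b unfolding Hev c_def x_def by simp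
    have HR: "\<forall>i j. nonconsec7 i j \<longrightarrow> quartic_eval QH (cross3 (L i) (L j)) = 0"
      using GR Kall unfolding Hev QG by simp
    have nc: "cross3 (L i) (L j) \<noteq> (0,0,0)" if "i < 7" "j<7" "i \<noteq> j" for i j
    proof -
      have "\<exists>k\<in>{0,1,2::nat}. k \<noteq> i \<and> k \<noteq> j" by auto
      then obtain k where k0: "k \<in> {0,1,2::nat}" "k \<noteq> i" "k \<noteq> j" by blast
      then have k: "k < 7" "k \<noteq> i" "k \<noteq> j" by auto
      show ?thesis using hd that k det_cross by blast
    qed
    have dx: "det3 (L 0) (L a) b \<noteq> 0" if "a < 7" "a \<noteq> 0" "nonconsec7 0 a" for a
      by (rule xfresh) (use nc[of 0 a] that Kall[of 0 a] b in auto)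
    have z0: "\<forall>b'. quartic_eval QH (cross3 (L 0) b') = 0"
    proof
      fix b'
      show "quartic_eval QH (cross3 (L 0) b') = 0"
      proof (rule five_line[of "L 0" b "L 2" "L 3" "L 4" "L 5"])
        show "L 0 \<noteq> (0,0,0)" using nc[of 0 2] by (auto simp: cross3_def)
        have sw: "det3 (L 0) b (L a) \<noteq> 0" if "a < 7" "a \<noteq> 0" "nonconsec7 0 a" for a
          using dx[OF that] det_swap[of "L 0" "L a" b] by simp
        show "det3 (L 0) b (L 2) \<noteq> 0" by (rule sw) (simp_all add: nonconsec7_def)
        show "det3 (L 0) b (L 3) \<noteq> 0" by (rule sw) (simp_all add: nonconsec7_def)
        show "det3 (L 0) b (L 4) \<noteq> 0" by (rule sw) (simp_all add: nonconsec7_def)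
        show "det3 (L 0) b (L 5) \<noteq> 0" by (rule sw) (simp_all add: nonconsec7_def)
        show "det3 (L 0) (L 2) (L 3) \<noteq> 0" using hd by simp
        show "det3 (L 0) (L 2) (L 4) \<noteq> 0" using hd by simp
        show "det3 (L 0) (L 2) (L 5) \<noteq> 0" using hd by simp
        show "det3 (L 0) (L 3) (L 4) \<noteq> 0" using hd by simp
        show "det3 (L 0) (L 3) (L 5) \<noteq> 0" using hd by simp
        show "det3 (L 0) (L 4) (L 5) \<noteq> 0" using hd by simp
        show "quartic_eval QH (cross3 (L 0) b) = 0" using Hx x_def by simp
        show "quartic_eval QH (cross3 (L 0) (L 2)) = 0" using HR by (simp add: nonconsec7_def)
        show "quartic_eval QH (cross3 (L 0) (L 3)) = 0" using HR by (simp add: nonconsec7_def)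
        show "quartic_eval QH (cross3 (L 0) (L 4)) = 0" using HR by (simp add: nonconsec7_def)
        show "quartic_eval QH (cross3 (L 0) (L 5)) = 0" using HR by (simp add: nonconsec7_def)
        show "dot3 (L 0) (cross3 (L 0) b') = 0" by (rule id4)
      qed
    qed
    have "quartic_eval QH p = 0" for p by (rule chain[OF hd HR z0])
    then have "G = (\<lambda>p. c * klein p)" using Hev by (auto intro!: ext)
    then show "\<exists>c. G = (\<lambda>p. c * klein p)" by blast
  qed
qed

end
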